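(* For $0<q<1$ and $w\in\mathbb{C}$, \[ \sum_{k=-\infty}^{\infty}q^{-k/2}\,\mathfrak{j}_k(2w;q)^2=\mathfrak{j}_0(2w;q)^2+\sum_{k=1}^\infty\big(q^{k/2}+q^{-k/2}\big)\mathfrak{j}_k(2w;q)^2=(-q^{1/2}w^2;q)_\infty. \] Equivalently, \[ J_0^{(2)}(2w;q)^2+\sum_{k=1}^\infty\big(q^{k/2}+q^{-k/2}\big)q^{k^2/2}J_k^{(2)}(2w;q)^2=(-w^2;q)_\infty. \]
   Context: $(a;q)_k=\prod_{j=0}^{k-1}(1-aq^j)$, $(a;q)_\infty=\lim_k(a;q)_k$, ${}_0\phi_1(;b;q,z)=\sum_{k\ge0}\frac{q^{k(k-1)}}{(q;q)_k(b;q)_k}z^k$. Jackson's second $q$-Bessel function is $J_\nu^{(2)}(x;q)=\frac{(q^{\nu+1};q)_\infty}{(q;q)_\infty}\left(\frac{x}{2}\right)^{\nu}{}_0\phi_1\!\left(;q^{\nu+1};q,-\frac{q^{\nu+1}x^2}{4}\right)$, and \[ \mathfrak{j}_\nu(x;q)=q^{\nu^2/4}J^{(2)}_\nu(q^{1/4}x;q)=q^{\nu(\nu+1)/4}\frac{(q^{\nu+1};q)_\infty}{(q;q)_\infty}\left(\frac{x}{2}\right)^{\nu}{}_0\phi_1\!\left(;q^{\nu+1};q,-q^{\nu+3/2}\frac{x^2}{4}\right). \] For negative integer orders $\nu=-n$, $\mathfrak{j}_{-n}$ is defined as the limit $\nu\to-n$ (it equals $(-1)^n\mathfrak{j}_n$).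 *)

theory Defs
  imports "HOL-Analysis.Analysis"
begin

definition qpoch :: "complex \<Rightarrow> real \<Rightarrow> nat \<Rightarrow> complex" where
  "qpoch a q n = (\<Prod>j<n. 1 - a * complex_of_real (q ^ j))"

definition qpoch_inf :: "complex \<Rightarrow> real \<Rightarrow> complex" where
  "qpoch_inf a q = lim (\<lambda>n. qpoch a q n)"

definition phi01 :: "complex \<Rightarrow> real \<Rightarrow> complex \<Rightarrow> complex" where
  "phi01 b q z = (\<Sum>k. complex_of_real (q ^ (k * (k - 1)))
                       / (qpoch (complex_of_real q) q k * qpoch b q k) * z ^ k)"

definition jackson2 :: "nat \<Rightarrow> complex \<Rightarrow> real \<Rightarrow> complex" where
  "jackson2 n x q =
     qpoch_inf (complex_of_real (q ^ (n + 1))) q / qpoch_inf (complex_of_real q) q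
     * (x / 2) ^ n
     * phi01 (complex_of_real (q ^ (n + 1))) q
             (- complex_of_real (q ^ (n + 1)) * x\<^sup>2 / 4)"

text \<open>The normalized function frak-j of integer order: for n \<ge> 0,
  q^(n^2/4) J^(2)_n(q^(1/4) x; q); for negative order -n the limiting value
  (-1)^n frak-j_n.\<close>
definition jfrak :: "int \<Rightarrow> complex \<Rightarrow> real \<Rightarrow> complex" where
  "jfrak k x q =
     (if k \<ge> 0 then complex_of_real (q powr (real_of_int k ^ 2 / 4))
                     * jackson2 (nat k) (complex_of_real (q powr (1/4)) * x) q
      else (-1) ^ nat (-k) * complex_of_real (q powr (real_of_int (-k) ^ 2 / 4))
                     * jackson2 (nat (-k)) (complex_of_real (q powr (1/4)) * x) q)"

end

theory Submission imports Defs begin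

definition Qr :: "real \<Rightarrow> nat \<Rightarrow> real" where "Qr q n = (\<Prod>j<n. 1 - q ^ Suc j)"
definition tri :: "nat \<Rightarrow> nat" where "tri k = k * (k - 1) div 2"
definition gb :: "real \<Rightarrow> nat \<Rightarrow> nat \<Rightarrow> real" where
  "gb q n k = (if k \<le> n then Qr q n / (Qr q k * Qr q (n - k)) else 0)"

lemma tri_Suc: "tri (Suc k) = tri k + k"
  unfolding tri_def by (cases k) (auto simp: algebra_simps)

lemma tri_0[simp]: "tri 0 = 0" by (simp add: tri_def)

lemma Qr_0[simp]: "Qr q 0 = 1" by (simp add: Qr_def)
lemma Qr_Suc: "Qr q (Suc n) = Qr q n * (1 - q ^ Suc n)"
  by (simp add: Qr_def)

context fixes q :: real assumes q0: "0 < q" and q1: "q < 1"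
begin

lemma qpow_le: "q ^ Suc n \<le> q"
  using q0 q1 by (metis less_eq_real_def power_Suc_le_self)

lemma qpow_lt1: "q ^ Suc n < 1"
  using qpow_le[of n] q1 by linarith

lemma Qr_pos: "Qr q n > 0"
proof (induction n)
  case (Suc n)
  have "1 - q ^ Suc n > 0" using qpow_lt1[of n] by linarith
  then show ?case using Suc by (simp add: Qr_Suc)
qed simp

lemma Qr_ge: "Qr q n \<ge> (1 - q) ^ n"
proof (induction n)
  case (Suc n)
  have "(1 - q) ^ Suc n = (1-q)^n * (1 - q)" by simp
  also have "\<dots> \<le> Qr q n * (1 - q ^ Suc n)"
    using Suc q1 qpow_le[of n] less_imp_le[OF Qr_pos[of n]] by (intro mult_mono) auto
  finally show ?case by (simp add: Qr_Suc)
qed simp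

lemma Qr_mono: "Qr q (m + d) \<le> Qr q m"
proof (induction d)
  case (Suc d)
  have "Qr q (m + Suc d) = Qr q (m + d) * (1 - q ^ Suc (m+d))" by (simp add: Qr_Suc)
  also have "\<dots> \<le> Qr q (m + d)"
    using Qr_pos[of "m+d"] q0 by (simp add: mult_left_le)
  finally show ?case using Suc by simp
qed simp

lemma gb_n0[simp]: "gb q n 0 = 1"
  using Qr_pos[of n] by (simp add: gb_def)

lemma gb_nn[simp]: "gb q n n = 1"
  using Qr_pos[of n] by (simp add: gb_def)

lemma gb_gt: "n < k \<Longrightarrow> gb q n k = 0" by (simp add: gb_def)

lemma frac_aux:
  fixes A D a b N x :: real
  assumes "A > 0" "D > 0" "a > 0" "b > 0"
  shows "N * (x * b + a) / (A * a * (D * b)) = x * (N / (A * a * D)) + N / (A * (D * b))"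
  using assms by (simp add: field_simps)

lemma gb_pascal: "gb q (Suc n) (Suc k) = q ^ Suc k * gb q n (Suc k) + gb q n k"
proof (cases "k < n")
  case True
  then obtain d where "n = Suc (k + d)" using less_imp_Suc_add by blast
  then have n: "n = k + Suc d" by simp
  have e1: "Suc n - Suc k = Suc d" "n - Suc k = d" "n - k = Suc d" using n by auto
  have pos: "Qr q k > 0" "Qr q d > 0" using Qr_pos by auto
  have l1: "1 - q ^ Suc k > 0" "1 - q ^ Suc d > 0" using qpow_lt1 by auto
  have key: "1 - q ^ Suc n = q ^ Suc k * (1 - q ^ Suc d) + (1 - q ^ Suc k)"
    unfolding n by (simp add: power_add algebra_simps)
  have "gb q (Suc n) (Suc k) = Qr q n * (q ^ Suc k * (1 - q ^ Suc d) + (1 - q ^ Suc k)) / (Qr q k * (1 - q ^ Suc k) * (Qr q d * (1 - q ^ Suc d)))"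
    using True by (simp only: gb_def e1 Qr_Suc key[symmetric] if_True Suc_le_mono less_imp_le)
  also have "\<dots> = q ^ Suc k * (Qr q n / (Qr q k * (1 - q ^ Suc k) * Qr q d)) + Qr q n / (Qr q k * (Qr q d * (1 - q ^ Suc d)))"
    by (rule frac_aux[OF pos l1])
  also have "\<dots> = q ^ Suc k * gb q n (Suc k) + gb q n k"
    using True by (simp only: gb_def e1 Qr_Suc if_True Suc_leI less_imp_le)
  finally show ?thesis .
next
  case False
  have "Qr q n > 0" "Qr q (Suc n) > 0" using Qr_pos by auto
  with False show ?thesis
    by (cases "k = n") (auto simp: gb_def)
qed

lemma gaussian:
  fixes z :: "'a::real_field"
  shows "(\<Prod>j<n. 1 + z * of_real (q ^ j)) = (\<Sum>k\<le>n. of_real (gb q n k * q ^ tri k) * z ^ k)"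
proof (induction n arbitrary: z)
  case 0
  then show ?case by simp
next
  case (Suc n)
  have pp: "(\<Prod>j<n. 1 + z * of_real (q ^ Suc j)) = (\<Prod>j<n. 1 + (z * of_real q) * of_real (q ^ j))"
    by (simp add: mult.assoc)
  have "(\<Prod>j<Suc n. 1 + z * of_real (q ^ j)) = (1 + z) * (\<Prod>j<n. 1 + z * of_real (q ^ Suc j))"
    by (subst prod.lessThan_Suc_shift) simp
  also have "\<dots> = (1 + z) * (\<Prod>j<n. 1 + (z * of_real q) * of_real (q ^ j))"
    by (simp only: pp)
  also have "\<dots> = (1 + z) * (\<Sum>k\<le>n. of_real (gb q n k * q ^ tri k) * (z * of_real q) ^ k)"
    by (subst Suc) (rule refl)
  also have "\<dots> = (\<Sum>k\<le>n. of_real (gb q n k * q ^ tri k * q ^ k) * z ^ k)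
      + (\<Sum>k\<le>n. of_real (gb q n k * q ^ tri (Suc k)) * z ^ Suc k)"
    by (simp add: distrib_right sum_distrib_left tri_Suc power_add power_mult_distrib sum.distrib[symmetric] algebra_simps)
  also have "(\<Sum>k\<le>n. of_real (gb q n k * q ^ tri k * q ^ k) * z ^ k)
     = (\<Sum>k\<le>Suc n. of_real (gb q n k * q ^ tri k * q ^ k) * z ^ k)"
    by (simp add: sum.atMost_Suc gb_gt)
  also have "\<dots> = 1 + (\<Sum>k\<le>n. of_real (gb q n (Suc k) * q ^ tri (Suc k) * q ^ Suc k) * z ^ Suc k)"
    by (subst sum.atMost_Suc_shift) simp
  finally have "(\<Prod>j<Suc n. 1 + z * of_real (q ^ j)) = 1 + (\<Sum>k\<le>n. of_real (gb q (Suc n) (Suc k) * q ^ tri (Suc k)) * z ^ Suc k)"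
    by (simp add: gb_pascal sum.distrib[symmetric] algebra_simps)
  also have "\<dots> = (\<Sum>k\<le>Suc n. of_real (gb q (Suc n) k * q ^ tri k) * z ^ k)"
    by (subst sum.atMost_Suc_shift) simp
  finally show ?case .
qed

end

context fixes q :: real assumes q0: "0 < q" and q1: "q < 1"
begin

lemma summable_qg: assumes "0 \<le> c" shows "summable (\<lambda>m. q ^ tri m * c ^ m)"
proof -
  have "(\<lambda>n. q ^ n * c) \<longlonglongrightarrow> 0 * c"
    using q0 q1 by (intro tendsto_intros) auto
  then have "eventually (\<lambda>n. q ^ n * c < 1/2) sequentially"
    by (intro order_tendstoD) auto
  then obtain N where N: "\<And>n. n \<ge> N \<Longrightarrow> q ^ n * c < 1/2"
    by (auto simp: eventually_sequentially)
  show ?thesis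
  proof (rule summable_ratio_test[of "1/2" N])
    fix n assume "n \<ge> N"
    have "norm (q ^ tri (Suc n) * c ^ Suc n) = (q ^ n * c) * (q ^ tri n * c ^ n)"
      using q0 assms by (simp add: tri_Suc power_add algebra_simps)
    also have "\<dots> \<le> 1/2 * (q ^ tri n * c ^ n)"
      using N[OF \<open>n \<ge> N\<close>] q0 assms by (intro mult_right_mono) auto
    finally show "norm (q ^ tri (Suc n) * c ^ Suc n) \<le> 1/2 * norm (q ^ tri n * c ^ n)"
      using q0 assms by simp
  qed simp
qed

definition Qinf where "Qinf = prodinf (\<lambda>j. 1 - q ^ Suc j)"

lemma Qinf_facts: "Qr q \<longlonglongrightarrow> Qinf" "Qinf \<noteq> 0"
proof -
  have s: "summable (\<lambda>i. norm ((1 - q ^ Suc i) - 1))"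
    using q0 q1 by (simp add: summable_geometric summable_mult)
  have cp: "convergent_prod (\<lambda>j. 1 - q ^ Suc j)"
    by (rule abs_convergent_prod_imp_convergent_prod[OF summable_imp_abs_convergent_prod[OF s]])
  have "(\<lambda>n. Qr q (Suc n)) \<longlonglongrightarrow> Qinf"
    using convergent_prod_LIMSEQ[OF cp] unfolding Qinf_def Qr_def
    by (simp add: lessThan_Suc_atMost)
  then show "Qr q \<longlonglongrightarrow> Qinf" by (simp add: filterlim_sequentially_Suc)
  show "Qinf \<noteq> 0" unfolding Qinf_def
    using qpow_lt1[OF q0 q1] by (intro prodinf_nonzero[OF cp]) (metis less_irrefl right_minus_eq)
qed

lemma gb_lim: "(\<lambda>n. gb q n k) \<longlonglongrightarrow> 1 / Qr q k"
proof (rule LIMSEQ_offset[where k = k])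
  have "(\<lambda>n. Qr q (n + k) / (Qr q k * Qr q n)) \<longlonglongrightarrow> Qinf / (Qr q k * Qinf)"
    using Qinf_facts Qr_pos[OF q0 q1, of k]
    by (intro tendsto_intros LIMSEQ_ignore_initial_segment) auto
  then show "(\<lambda>n. gb q (n + k) k) \<longlonglongrightarrow> 1 / Qr q k"
    using Qinf_facts by (simp add: gb_def)
qed

lemma gb_bound: "0 \<le> gb q n k \<and> gb q n k \<le> 1 / (1 - q) ^ k"
proof (cases "k \<le> n")
  case True
  then obtain d where n: "n = d + k" by (metis le_add_diff_inverse2)
  have p: "Qr q d > 0" "Qr q k > 0" "Qr q n > 0" using Qr_pos[OF q0 q1] by auto
  have "Qr q n \<le> Qr q d" unfolding n by (rule Qr_mono[OF q0 q1])
  then have "gb q n k \<le> 1 / Qr q k" using p True n by (simp add: gb_def field_simps)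
  also have "\<dots> \<le> 1 / (1 - q) ^ k" using Qr_ge[OF q0 q1, of k] q1 p
    by (intro divide_left_mono) (auto intro!: mult_pos_pos)
  finally show ?thesis using p True Qr_pos[OF q0 q1, of "n-k"] by (simp add: gb_def)
next
  case False then show ?thesis using q1 by (simp add: gb_def)
qed

lemma qpoch_neg: "qpoch (- y) q n = (\<Sum>k\<le>n. of_real (gb q n k * q ^ tri k) * y ^ k)"
  unfolding qpoch_def using gaussian[OF q0 q1, where z=y and n=n] by simp

lemma euler:
  "(\<lambda>N. of_real (q ^ tri N / Qr q N) * y ^ N) sums qpoch_inf (- y) q"
proof -
  define a where "a k n = of_real (gb q n k * q ^ tri k) * y ^ k" for k n
  define M where "M k = q ^ tri k * (norm y / (1 - q)) ^ k" for k
  have lim: "(\<lambda>n. a k n) \<longlonglongrightarrow> of_real (q ^ tri k / Qr q k) * y ^ k" for k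
  proof -
    have "(\<lambda>n. of_real (gb q n k * q ^ tri k) * y ^ k) \<longlonglongrightarrow> of_real (1 / Qr q k * q ^ tri k) * y ^ k"
      by (intro tendsto_intros gb_lim)
    then show ?thesis by (simp add: a_def)
  qed
  have bound: "norm (a k n) \<le> M k" for k n
  proof -
    have "norm (a k n) = gb q n k * q ^ tri k * norm y ^ k"
      using gb_bound[of n k] q0 by (simp add: a_def norm_mult norm_power)
    also have "\<dots> \<le> 1 / (1 - q) ^ k * q ^ tri k * norm y ^ k"
      using gb_bound[of n k] q0 by (intro mult_right_mono) auto
    also have "\<dots> = M k" by (simp add: M_def power_divide)
    finally show ?thesis .
  qed
  have ev: "eventually (\<lambda>(k,n). norm (a k n) \<le> M k) (at_top \<times>\<^sub>F sequentially)"
    by (intro always_eventually) (auto simp: case_prod_beta bound)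
  have sM: "summable M" unfolding M_def using q1 by (intro summable_qg) auto
  have T: "((\<lambda>n. suminf (\<lambda>k. a k n)) \<longlonglongrightarrow> suminf (\<lambda>k. of_real (q ^ tri k / Qr q k) * y ^ k))"
   and sb: "summable (\<lambda>k. norm (of_real (q ^ tri k / Qr q k) * y ^ k :: complex))"
    using tannerys_theorem[OF lim ev sM] by auto
  have "suminf (\<lambda>k. a k n) = qpoch (- y) q n" for n
  proof -
    have "suminf (\<lambda>k. a k n) = (\<Sum>k\<le>n. a k n)"
      by (rule suminf_finite) (auto simp: a_def gb_def)
    then show ?thesis by (simp add: qpoch_neg a_def)
  qed
  with T have "qpoch (- y) q \<longlonglongrightarrow> suminf (\<lambda>k. of_real (q ^ tri k / Qr q k) * y ^ k)" by simp
  then have "qpoch_inf (- y) q = suminf (\<lambda>k. of_real (q ^ tri k / Qr q k) * y ^ k)"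
    unfolding qpoch_inf_def by (rule limI)
  then show ?thesis using summable_sums[OF summable_norm_cancel[OF sb]] by simp
qed

end

definition sN :: "real \<Rightarrow> complex \<Rightarrow> nat \<Rightarrow> nat \<Rightarrow> complex" where
  "sN q v n m = of_real ((-1) ^ m * q ^ (m * m + m * n) / (Qr q m * Qr q (n + m))) * v ^ (2 * m)"

lemma Qr_add: "Qr q (n + m) = Qr q n * (\<Prod>j<m. 1 - q ^ (n + 1 + j))"
  by (induction m) (auto simp: Qr_Suc)

lemma aux_pow:
  fixes a t x :: real
  assumes "a > 0"
  shows "t / (a ^ m * a ^ (n + m)) * x = 1 / a ^ n * (t * (x / (a ^ m * a ^ m)))"
  using assms by (simp add: power_add field_simps)

context fixes q :: real assumes q0: "0 < q" and q1: "q < 1"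
begin

lemma qpoch_shift: "qpoch (of_real (q ^ (n + 1))) q m = of_real (Qr q (n + m) / Qr q n)"
proof -
  have "qpoch (of_real (q ^ (n + 1))) q m = of_real (\<Prod>j<m. 1 - q ^ (n + 1 + j))"
    unfolding qpoch_def by (simp add: power_add mult.assoc)
  also have "\<dots> = of_real (Qr q (n + m) / Qr q n)"
    using Qr_pos[OF q0 q1, of n] by (simp add: Qr_add)
  finally show ?thesis .
qed

lemma qpoch_inf_shift: "qpoch_inf (of_real (q ^ (n + 1))) q = of_real (Qinf q / Qr q n)"
proof -
  have "(\<lambda>m. Qr q (m + n)) \<longlonglongrightarrow> Qinf q"
    using Qinf_facts(1)[OF q0 q1] by (rule LIMSEQ_ignore_initial_segment)
  then have "(\<lambda>m. Qr q (m + n) / Qr q n) \<longlonglongrightarrow> Qinf q / Qr q n"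
    using Qr_pos[OF q0 q1, of n] by (intro tendsto_divide tendsto_const) auto
  then have "(\<lambda>m. of_real (Qr q (m + n) / Qr q n) :: complex) \<longlonglongrightarrow> of_real (Qinf q / Qr q n)"
    by (rule tendsto_of_real)
  then have "(\<lambda>m. qpoch (of_real (q ^ (n + 1))) q m) \<longlonglongrightarrow> of_real (Qinf q / Qr q n)"
    unfolding qpoch_shift by (simp add: add.commute)
  then show ?thesis unfolding qpoch_inf_def by (rule limI)
qed

lemma qpoch_q: "qpoch (of_real q) q m = of_real (Qr q m)"
  using qpoch_shift[of 0 m] by simp

lemma qpoch_inf_q: "qpoch_inf (of_real q) q = of_real (Qinf q)"
  using qpoch_inf_shift[of 0] by simp

lemma sN_bound: "norm (sN q v n m) \<le> (1 / (1 - q) ^ n) * (q ^ tri m * ((norm v)\<^sup>2 / (1 - q)\<^sup>2) ^ m)"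
proof -
  have p: "Qr q m > 0" "Qr q (n + m) > 0" "(1 - q) ^ m > 0" "(1 - q) ^ (n + m) > 0"
    using Qr_pos[OF q0 q1] q1 by auto
  have e: "tri m \<le> m * m + m * n"
  proof -
    have "tri m \<le> m * (m - 1)" unfolding tri_def by (rule div_le_dividend)
    also have "\<dots> \<le> m * m" by (rule mult_le_mono2) simp
    finally show ?thesis by simp
  qed
  have "norm (sN q v n m) = \<bar>(-1) ^ m * q ^ (m * m + m * n) / (Qr q m * Qr q (n + m))\<bar> * norm v ^ (2 * m)"
    unfolding sN_def by (simp only: norm_mult norm_of_real norm_power)
  also have "\<bar>(-1) ^ m * q ^ (m * m + m * n) / (Qr q m * Qr q (n + m))\<bar> * norm v ^ (2 * m) = q ^ (m * m + m * n) / (Qr q m * Qr q (n + m)) * norm v ^ (2 * m)"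
    using p q0 by (simp add: abs_mult power_abs)
  also have "\<dots> \<le> q ^ tri m / ((1 - q) ^ m * (1 - q) ^ (n + m)) * norm v ^ (2 * m)"
  proof (intro mult_right_mono frac_le)
    show "q ^ (m * m + m * n) \<le> q ^ tri m" using q0 q1 e by (intro power_decreasing) auto
    show "(1 - q) ^ m * (1 - q) ^ (n + m) \<le> Qr q m * Qr q (n + m)"
      using Qr_ge[OF q0 q1] p by (intro mult_mono) (auto intro: less_imp_le)
  qed (use p q0 in auto)
  also have "\<dots> = (1 / (1 - q) ^ n) * (q ^ tri m * (norm v ^ (2 * m) / ((1 - q) ^ m * (1 - q) ^ m)))"
    using q1 by (intro aux_pow) auto
  also have "norm v ^ (2 * m) / ((1 - q) ^ m * (1 - q) ^ m) = ((norm v)\<^sup>2 / (1 - q)\<^sup>2) ^ m"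
    by (simp add: power_divide power_mult[symmetric] mult_2 power_add)
  finally show ?thesis .
qed

lemma sN_summable: "summable (\<lambda>m. norm (sN q v n m))"
proof -
  have "summable (\<lambda>m. q ^ tri m * ((norm v)\<^sup>2 / (1 - q)\<^sup>2) ^ m)"
    by (rule summable_qg[OF q0 q1]) simp
  then have "summable (\<lambda>m. (1 / (1 - q) ^ n) * (q ^ tri m * ((norm v)\<^sup>2 / (1 - q)\<^sup>2) ^ m))"
    by (rule summable_mult)
  then show ?thesis by (rule summable_comparison_test'[where N=0]) (use sN_bound in simp)
qed

lemma jackson_formula: "jackson2 n (2 * v) q = v ^ n * suminf (sN q v n)"
proof -
  have pn: "Qr q n > 0" using Qr_pos[OF q0 q1] by auto
  have trm: "of_real (q ^ (k * (k - 1))) / (qpoch (of_real q) q k * qpoch (of_real (q ^ (n + 1))) q k)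
      * (- of_real (q ^ (n + 1)) * (2 * v)\<^sup>2 / 4) ^ k = of_real (Qr q n) * sN q v n k" for k
  proof -
    have p: "Qr q k > 0" "Qr q (n + k) > 0" using Qr_pos[OF q0 q1] by auto
    have ex: "k * (k - 1) + (n + 1) * k = k * k + k * n" by (cases k) (simp_all add: algebra_simps)
    have t1: "- of_real (q ^ (n + 1)) * (2 * v)\<^sup>2 / 4 = of_real (-(q ^ (n + 1))) * v\<^sup>2"
      by (simp add: power_mult_distrib)
    have "(- of_real (q ^ (n + 1)) * (2 * v)\<^sup>2 / 4) ^ k = of_real ((-1) ^ k * q ^ ((n + 1) * k)) * v ^ (2 * k)"
    proof -
      have "(complex_of_real (-(q ^ (n + 1))) * v\<^sup>2) ^ k = complex_of_real ((-(q ^ (n + 1))) ^ k) * (v\<^sup>2) ^ k"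
        by (simp only: power_mult_distrib of_real_power)
      also have "(-(q ^ (n + 1))) ^ k = (-1) ^ k * q ^ ((n + 1) * k)"
        by (subst power_minus) (simp only: power_mult)
      also have "(v\<^sup>2) ^ k = v ^ (2 * k)"
        by (simp only: power_mult)
      finally show ?thesis unfolding t1 .
    qed
    note pw = this
    have "of_real (q ^ (k * (k - 1))) / (qpoch (of_real q) q k * qpoch (of_real (q ^ (n + 1))) q k)
      * (- of_real (q ^ (n + 1)) * (2 * v)\<^sup>2 / 4) ^ k
      = of_real (q ^ (k * (k - 1)) / (Qr q k * (Qr q (n + k) / Qr q n)) * ((-1) ^ k * q ^ ((n + 1) * k))) * v ^ (2 * k)"
      unfolding qpoch_q qpoch_shift pw of_real_mult of_real_divide by (simp only: mult.assoc)
    also have "q ^ (k * (k - 1)) / (Qr q k * (Qr q (n + k) / Qr q n)) * ((-1) ^ k * q ^ ((n + 1) * k))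
       = Qr q n * ((-1) ^ k * q ^ (k * k + k * n) / (Qr q k * Qr q (n + k)))"
      using p pn by (simp add: ex[symmetric] power_add field_simps)
    finally show ?thesis by (simp add: sN_def)
  qed
  have sm: "summable (sN q v n)" by (rule summable_norm_cancel[OF sN_summable])
  have "phi01 (of_real (q ^ (n + 1))) q (- of_real (q ^ (n + 1)) * (2 * v)\<^sup>2 / 4)
      = (\<Sum>k. of_real (Qr q n) * sN q v n k)"
    unfolding phi01_def by (simp only: trm)
  also have "\<dots> = of_real (Qr q n) * suminf (sN q v n)" by (rule suminf_mult[OF sm])
  finally have ph: "phi01 (of_real (q ^ (n + 1))) q (- of_real (q ^ (n + 1)) * (2 * v)\<^sup>2 / 4)
      = of_real (Qr q n) * suminf (sN q v n)" .
  have "jackson2 n (2 * v) q = of_real (Qinf q / Qr q n) / of_real (Qinf q) * v ^ n * (of_real (Qr q n) * suminf (sN q v n))"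
    unfolding jackson2_def ph qpoch_inf_shift qpoch_inf_q by simp
  also have "\<dots> = v ^ n * suminf (sN q v n)"
    using Qinf_facts(2)[OF q0 q1] pn by (simp add: field_simps)
  finally show ?thesis .
qed

end

lemma tri2: "2 * int (tri x) = int x * (int x - 1)"
  by (induction x) (auto simp: tri_Suc algebra_simps)

lemma twice_nat: "2 * int a = 2 * int b \<Longrightarrow> a = b" by simp

definition wt :: "int \<Rightarrow> nat" where "wt k = nat (k * (k - 1) div 2)"

lemma wt_pos: "wt (int n) = tri n"
proof -
  have "int n * (int n - 1) = 2 * int (tri n)" using tri2[of n] by simp
  then show ?thesis unfolding wt_def by simp
qed

lemma wt_neg: "wt (- int n) = tri (Suc n)"
proof -
  have "(- int n) * (- int n - 1) = 2 * int (tri (Suc n))" using tri2[of "Suc n"] by (simp add: algebra_simps)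
  then show ?thesis unfolding wt_def by simp
qed

lemma E1: "tri n + (m * m + m * n) + (m' * m' + m' * n) + m * m' = tri (m + m' + n) + tri (Suc m) + tri (Suc m')"
proof -
  have "2 * int (tri n + (m * m + m * n) + (m' * m' + m' * n) + m * m') = 2 * int (tri (m + m' + n) + tri (Suc m) + tri (Suc m'))"
    using tri2[of n] tri2[of "m + m' + n"] tri2[of "Suc m"] tri2[of "Suc m'"]
    by (simp add: algebra_simps)
  then show ?thesis by (rule twice_nat)
qed

lemma E2: "tri (Suc n) + (m * m + m * n) + (m' * m' + m' * n) + (m + n) * (m' + n) = tri (m + m' + n) + tri (Suc (m + n)) + tri (Suc (m' + n))"
proof -
  have "2 * int (tri (Suc n) + (m * m + m * n) + (m' * m' + m' * n) + (m + n) * (m' + n)) = 2 * int (tri (m + m' + n) + tri (Suc (m + n)) + tri (Suc (m' + n)))"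
    using tri2[of "Suc n"] tri2[of "m + m' + n"] tri2[of "Suc (m + n)"] tri2[of "Suc (m' + n)"]
    by (simp add: algebra_simps)
  then show ?thesis by (rule twice_nat)
qed

definition fwd :: "int \<times> nat \<times> nat \<Rightarrow> nat \<times> nat \<times> nat" where
  "fwd = (\<lambda>(k, m, m'). if k \<ge> 0 then (m + m' + nat k, m, m') else (m + m' + nat (-k), m + nat (-k), m' + nat (-k)))"
definition bwd :: "nat \<times> nat \<times> nat \<Rightarrow> int \<times> nat \<times> nat" where
  "bwd = (\<lambda>(N, a, b). if int N - int a - int b \<ge> 0 then (int N - int a - int b, a, b) else (int N - int a - int b, N - b, N - a))"

definition SS :: "(nat \<times> nat \<times> nat) set" where "SS = Sigma UNIV (\<lambda>N. {..N} \<times> {..N})"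

lemma fwd_SS: "fwd x \<in> SS"
  by (cases x) (auto simp: fwd_def SS_def)

lemma bwd_fwd: "bwd (fwd x) = x"
  by (cases x) (auto simp: fwd_def bwd_def)

lemma fwd_bwd: "y \<in> SS \<Longrightarrow> fwd (bwd y) = y"
  by (cases y) (auto simp: fwd_def bwd_def SS_def)

definition Xf :: "real \<Rightarrow> nat \<Rightarrow> nat \<Rightarrow> nat \<Rightarrow> real" where
  "Xf q N a b = (-1) ^ (a + b) * q ^ (tri (Suc a) + tri (Suc b)) / (q ^ (a * b) * (Qr q a * Qr q (N - a) * Qr q b * Qr q (N - b)))"

definition hval :: "real \<Rightarrow> complex \<Rightarrow> nat \<times> nat \<times> nat \<Rightarrow> complex" where
  "hval q v = (\<lambda>(N, a, b). of_real (q ^ tri N * Xf q N a b) * v ^ (2 * N))"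

definition Tf :: "real \<Rightarrow> complex \<Rightarrow> int \<times> nat \<times> nat \<Rightarrow> complex" where
  "Tf q v = (\<lambda>(k, m, m'). of_real (q ^ wt k) * v ^ (2 * nat \<bar>k\<bar>) * (sN q v (nat \<bar>k\<bar>) m * sN q v (nat \<bar>k\<bar>) m'))"

lemma aux_T:
  fixes A B C D X Y s s1 s2 P1 P2 P3 P4 PP :: real
  assumes "D > 0" "P1 > 0" "P2 > 0" "P3 > 0" "P4 > 0" "A * B * C * D = X * Y" "s = s1 * s2" "PP = P1 * P2 * P3 * P4"
  shows "A * (s1 * B / (P1 * P2)) * (s2 * C / (P3 * P4)) = X * (s * Y / (D * PP))"
proof -
  have "X * (s * Y / (D * PP)) = s * (X * Y) / (D * PP)" by simp
  also have "\<dots> = s * (A * B * C * D) / (D * PP)" by (simp only: assms(6))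
  also have "\<dots> = A * (s1 * B / (P1 * P2)) * (s2 * C / (P3 * P4))"
    using assms(1-5) unfolding assms(7,8) by (simp add: field_simps)
  finally show ?thesis by simp
qed

context fixes q :: real assumes q0: "0 < q" and q1: "q < 1"
begin

lemma T_fwd: "Tf q v x = hval q v (fwd x)"
proof -
  obtain k m m' where x: "x = (k, m, m')" by (cases x)
  show ?thesis
  proof (cases "k \<ge> 0")
    case True
    then obtain n where k: "k = int n" by (metis nonneg_int_cases)
    define N where "N = m + m' + n"
    have p: "Qr q m > 0" "Qr q m' > 0" "Qr q (n + m) > 0" "Qr q (n + m') > 0" "q ^ (m * m') > 0"
      using Qr_pos[OF q0 q1] q0 by auto
    have nm: "N - m = n + m'" "N - m' = n + m" unfolding N_def by auto
    have ex: "q ^ tri n * q ^ (m * m + m * n) * q ^ (m' * m' + m' * n) * q ^ (m * m') = q ^ tri N * q ^ (tri (Suc m) + tri (Suc m'))"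
    proof -
      have "q ^ tri n * q ^ (m * m + m * n) * q ^ (m' * m' + m' * n) * q ^ (m * m') = q ^ (tri n + (m * m + m * n) + (m' * m' + m' * n) + m * m')"
        by (simp only: power_add)
      also have "\<dots> = q ^ (tri N + (tri (Suc m) + tri (Suc m')))"
        unfolding E1 N_def by (simp only: add.assoc)
      also have "\<dots> = q ^ tri N * q ^ (tri (Suc m) + tri (Suc m'))" by (simp only: power_add)
      finally show ?thesis .
    qed
    have r: "q ^ tri n * ((-1) ^ m * q ^ (m * m + m * n) / (Qr q m * Qr q (n + m))) * ((-1) ^ m' * q ^ (m' * m' + m' * n) / (Qr q m' * Qr q (n + m')))
      = q ^ tri N * Xf q N m m'"
      unfolding Xf_def nm by (rule aux_T[OF p(5) p(1) p(3) p(2) p(4) ex]) (simp_all add: power_add mult_ac)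
    have vv: "v ^ (2 * n) * (v ^ (2 * m) * v ^ (2 * m')) = v ^ (2 * N)"
      unfolding N_def by (simp add: power_add[symmetric] algebra_simps)
    have "Tf q v x = of_real (q ^ tri n * ((-1) ^ m * q ^ (m * m + m * n) / (Qr q m * Qr q (n + m))) * ((-1) ^ m' * q ^ (m' * m' + m' * n) / (Qr q m' * Qr q (n + m'))))
        * (v ^ (2 * n) * (v ^ (2 * m) * v ^ (2 * m')))"
      unfolding Tf_def x k by (simp add: wt_pos sN_def algebra_simps)
    also have "\<dots> = hval q v (fwd x)"
      unfolding r vv by (simp add: hval_def fwd_def x k N_def)
    finally show ?thesis .
  next
    case False
    then obtain n where k: "k = - int n" by (metis nonpos_int_cases linorder_not_le less_imp_le)
    with False have n0: "n > 0" by simp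
    define N where "N = m + m' + n"
    have p: "Qr q m > 0" "Qr q m' > 0" "Qr q (n + m) > 0" "Qr q (n + m') > 0" "q ^ ((m + n) * (m' + n)) > 0"
      using Qr_pos[OF q0 q1] q0 by auto
    have nm: "N - (m + n) = m'" "N - (m' + n) = m" unfolding N_def by auto
    have ex: "q ^ tri (Suc n) * q ^ (m * m + m * n) * q ^ (m' * m' + m' * n) * q ^ ((m + n) * (m' + n)) = q ^ tri N * q ^ (tri (Suc (m + n)) + tri (Suc (m' + n)))"
    proof -
      have "q ^ tri (Suc n) * q ^ (m * m + m * n) * q ^ (m' * m' + m' * n) * q ^ ((m + n) * (m' + n)) = q ^ (tri (Suc n) + (m * m + m * n) + (m' * m' + m' * n) + (m + n) * (m' + n))"
        by (simp only: power_add)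
      also have "\<dots> = q ^ (tri N + (tri (Suc (m + n)) + tri (Suc (m' + n))))"
        unfolding E2 N_def by (simp only: add.assoc)
      also have "\<dots> = q ^ tri N * q ^ (tri (Suc (m + n)) + tri (Suc (m' + n)))" by (simp only: power_add)
      finally show ?thesis .
    qed
    have sg: "((-1::real) ^ (m + n + (m' + n))) = (-1) ^ m * (-1) ^ m'"
    proof -
      have "((-1::real) ^ (m + n + (m' + n))) = (-1) ^ m * (-1) ^ m' * ((-1) ^ n * (-1) ^ n)"
        by (simp only: power_add mult_ac)
      also have "(-1::real) ^ n * (-1) ^ n = 1" by (simp flip: power_add add: mult_2[symmetric] power_mult)
      finally show ?thesis by simp
    qed
    have r: "q ^ tri (Suc n) * ((-1) ^ m * q ^ (m * m + m * n) / (Qr q m * Qr q (n + m))) * ((-1) ^ m' * q ^ (m' * m' + m' * n) / (Qr q m' * Qr q (n + m')))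
      = q ^ tri N * Xf q N (m + n) (m' + n)"
      unfolding Xf_def nm by (rule aux_T[OF p(5) p(1) p(3) p(2) p(4) ex]) (use sg in \<open>simp_all add: ac_simps\<close>)
    have vv: "v ^ (2 * n) * (v ^ (2 * m) * v ^ (2 * m')) = v ^ (2 * N)"
      unfolding N_def by (simp add: power_add[symmetric] algebra_simps)
    have "Tf q v x = of_real (q ^ tri (Suc n) * ((-1) ^ m * q ^ (m * m + m * n) / (Qr q m * Qr q (n + m))) * ((-1) ^ m' * q ^ (m' * m' + m' * n) / (Qr q m' * Qr q (n + m'))))
        * (v ^ (2 * n) * (v ^ (2 * m) * v ^ (2 * m')))"
      unfolding Tf_def x k by (simp add: wt_neg sN_def algebra_simps)
    also have "\<dots> = hval q v (fwd x)"
      unfolding r vv using n0 by (simp add: hval_def fwd_def x k N_def)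
    finally show ?thesis .
  qed
qed

end

lemma prod_has_sum:
  fixes f g :: "nat \<Rightarrow> complex"
  assumes sf: "summable (\<lambda>n. norm (f n))" and sg: "summable (\<lambda>n. norm (g n))"
  shows "((\<lambda>(m, m'). f m * g m') has_sum (suminf f * suminf g)) UNIV"
proof -
  have hf: "(f has_sum suminf f) UNIV"
    by (rule norm_summable_imp_has_sum[OF sf summable_sums[OF summable_norm_cancel[OF sf]]])
  have hg: "(g has_sum suminf g) UNIV"
    by (rule norm_summable_imp_has_sum[OF sg summable_sums[OF summable_norm_cancel[OF sg]]])
  have hnf: "((\<lambda>n. norm (f n)) has_sum suminf (\<lambda>n. norm (f n))) UNIV"
    by (rule norm_summable_imp_has_sum) (use sf summable_sums in auto)
  have hng: "((\<lambda>n. norm (g n)) has_sum suminf (\<lambda>n. norm (g n))) UNIV"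
    by (rule norm_summable_imp_has_sum) (use sg summable_sums in auto)
  have "(\<lambda>(m, m'). norm (f m) * norm (g m')) summable_on Sigma UNIV (\<lambda>_. UNIV)"
  proof (rule summable_on_SigmaI)
    show "((\<lambda>y. case (x, y) of (m, m') \<Rightarrow> norm (f m) * norm (g m')) has_sum norm (f x) * suminf (\<lambda>n. norm (g n))) UNIV" for x
      using has_sum_cmult_right[OF hng, of "norm (f x)"] by simp
    show "(\<lambda>x. norm (f x) * suminf (\<lambda>n. norm (g n))) summable_on UNIV"
      using has_sum_cmult_left[OF hnf] by (auto simp: summable_on_def)
  qed auto
  then have "(\<lambda>x. norm ((\<lambda>(m, m'). f m * g m') x)) summable_on Sigma UNIV (\<lambda>_. UNIV)"
    by (rule summable_on_cong[THEN iffD1, rotated]) (auto simp: norm_mult)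
  then have sm: "(\<lambda>(m, m'). f m * g m') summable_on Sigma UNIV (\<lambda>_. UNIV)"
    by (rule abs_summable_summable)
  have "((\<lambda>(m, m'). f m * g m') has_sum (suminf f * suminf g)) (Sigma UNIV (\<lambda>_. UNIV))"
  proof (rule has_sum_SigmaI[OF _ _ sm])
    show "((\<lambda>y. case (x, y) of (m, m') \<Rightarrow> f m * g m') has_sum f x * suminf g) UNIV" for x
      using has_sum_cmult_right[OF hg, of "f x"] by simp
    show "((\<lambda>x. f x * suminf g) has_sum suminf f * suminf g) UNIV"
      by (rule has_sum_cmult_left[OF hf])
  qed
  then show ?thesis by simp
qed

context fixes q :: real assumes q0: "0 < q" and q1: "q < 1"
begin

lemma fiber_real: "(\<Sum>p\<in>{..N} \<times> {..N}. case p of (a, b) \<Rightarrow> Xf q N a b) = 1 / Qr q N"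
proof -
  define Y where "Y a = (-1) ^ a * q ^ tri (Suc a) / (Qr q a * Qr q (N - a))" for a
  define Z where "Z a b = (-1) ^ b * q ^ tri (Suc b) / (q ^ (a * b) * (Qr q b * Qr q (N - b)))" for a b
  have XYZ: "Xf q N a b = Y a * Z a b" for a b
    unfolding Xf_def Y_def Z_def by (simp add: power_add field_simps)
  have inner: "(\<Sum>b\<le>N. Z a b) = (1 / Qr q N) * (\<Prod>j<N. 1 + (- (q / q ^ a)) * q ^ j)" for a
  proof -
    have "(\<Prod>j<N. 1 + (- (q / q ^ a)) * q ^ j) = (\<Sum>b\<le>N. gb q N b * q ^ tri b * (- (q / q ^ a)) ^ b)"
      using gaussian[OF q0 q1, where z = "- (q / q ^ a)" and n = N] by simp
    also have "\<dots> = (\<Sum>b\<le>N. Qr q N * Z a b)"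
    proof (rule sum.cong)
      fix b assume "b \<in> {..N}"
      then have bN: "b \<le> N" by simp
      have p: "Qr q b > 0" "Qr q (N - b) > 0" "q ^ (a * b) > 0" "q ^ a > 0" using Qr_pos[OF q0 q1] q0 by auto
      have "(- (q / q ^ a)) ^ b = (-1) ^ b * q ^ b / q ^ (a * b)"
        by (subst power_minus) (simp add: power_divide power_mult)
      then show "gb q N b * q ^ tri b * (- (q / q ^ a)) ^ b = Qr q N * Z a b"
        unfolding Z_def gb_def using bN p by (simp add: tri_Suc power_add field_simps)
    qed simp
    finally show ?thesis using Qr_pos[OF q0 q1, of N] by (simp add: sum_distrib_left[symmetric])
  qed
  have pr0: "(\<Prod>j<N. 1 + (- (q / q ^ 0)) * q ^ j) = Qr q N"
    unfolding Qr_def by (rule prod.cong) simp_all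
  have i0: "(\<Sum>b\<le>N. Z 0 b) = 1"
    using inner[of 0] Qr_pos[OF q0 q1, of N] unfolding pr0 by simp
  have i1: "(\<Sum>b\<le>N. Z a b) = 0" if "a \<in> {..N} - {0}" for a
  proof -
    from that have a: "1 \<le> a" "a \<le> N" by auto
    have "(\<Prod>j<N. 1 + (- (q / q ^ a)) * q ^ j) = 0"
    proof (rule prod_zero)
      have "q ^ (a - 1) * q = q ^ a" using a by (cases a) (auto simp: mult.commute)
      then have "1 + (- (q / q ^ a)) * q ^ (a - 1) = 0" using q0 by (simp add: field_simps)
      then show "\<exists>j\<in>{..<N}. 1 + (- (q / q ^ a)) * q ^ j = 0" using a by (intro bexI[of _ "a - 1"]) auto
    qed simp
    then show ?thesis using inner[of a] by simp
  qed
  have "(\<Sum>p\<in>{..N} \<times> {..N}. case p of (a, b) \<Rightarrow> Xf q N a b) = (\<Sum>a\<le>N. \<Sum>b\<le>N. Xf q N a b)"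
    by (simp add: sum.cartesian_product)
  also have "\<dots> = (\<Sum>a\<le>N. Y a * (\<Sum>b\<le>N. Z a b))"
    by (simp add: XYZ sum_distrib_left)
  also have "\<dots> = Y 0 * (\<Sum>b\<le>N. Z 0 b) + (\<Sum>a\<in>{..N} - {0}. Y a * (\<Sum>b\<le>N. Z a b))"
    by (rule sum.remove) auto
  also have "\<dots> = 1 / Qr q N"
    using i0 i1 by (simp add: Y_def tri_def)
  finally show ?thesis .
qed

lemma twice_le: "2 * int a \<le> 2 * int b \<Longrightarrow> a \<le> b" by simp

lemma tri_ab: "a * b \<le> tri (Suc a) + tri (Suc b)"
proof -
  have ta: "2 * int (tri (Suc a)) = int a * (int a + 1)" using tri2[of "Suc a"] by (simp add: algebra_simps)
  have tb: "2 * int (tri (Suc b)) = int b * (int b + 1)" using tri2[of "Suc b"] by (simp add: algebra_simps)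
  have e: "int a * (int a + 1) + int b * (int b + 1) - 2 * (int a * int b) = (int a - int b)\<^sup>2 + int a + int b"
    by (simp add: power2_eq_square algebra_simps)
  have "(int a - int b)\<^sup>2 \<ge> 0" by simp
  then have "2 * (int a * int b) \<le> int a * (int a + 1) + int b * (int b + 1)" using e by linarith
  then have "2 * int (a * b) \<le> 2 * int (tri (Suc a) + tri (Suc b))" using ta tb by simp
  then show ?thesis by (rule twice_le)
qed

lemma hval_bound:
  assumes "a \<le> N" "b \<le> N"
  shows "norm (hval q v (N, a, b)) \<le> q ^ tri N * ((norm v)\<^sup>2 / (1 - q)\<^sup>2) ^ N"
proof -
  have p: "Qr q a > 0" "Qr q b > 0" "Qr q (N - a) > 0" "Qr q (N - b) > 0" "q ^ (a * b) > 0"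
    using Qr_pos[OF q0 q1] q0 by auto
  have g1: "(1 - q) ^ N \<le> Qr q a * Qr q (N - a)"
  proof -
    have "(1 - q) ^ N = (1 - q) ^ a * (1 - q) ^ (N - a)" using assms by (simp flip: power_add)
    also have "\<dots> \<le> Qr q a * Qr q (N - a)" using Qr_ge[OF q0 q1] q1 p by (intro mult_mono) auto
    finally show ?thesis .
  qed
  have g2: "(1 - q) ^ N \<le> Qr q b * Qr q (N - b)"
  proof -
    have "(1 - q) ^ N = (1 - q) ^ b * (1 - q) ^ (N - b)" using assms by (simp flip: power_add)
    also have "\<dots> \<le> Qr q b * Qr q (N - b)" using Qr_ge[OF q0 q1] q1 p by (intro mult_mono) auto
    finally show ?thesis .
  qed
  have qq: "q ^ (tri (Suc a) + tri (Suc b)) \<le> q ^ (a * b)"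
    using q0 q1 tri_ab by (intro power_decreasing) auto
  have "\<bar>Xf q N a b\<bar> = q ^ (tri (Suc a) + tri (Suc b)) / (q ^ (a * b) * (Qr q a * Qr q (N - a) * Qr q b * Qr q (N - b)))"
    unfolding Xf_def using p q0 by (simp add: abs_mult)
  also have "\<dots> \<le> q ^ (a * b) / (q ^ (a * b) * ((1 - q) ^ N * (1 - q) ^ N))"
  proof (rule frac_le)
    show "q ^ (a * b) * ((1 - q) ^ N * (1 - q) ^ N) \<le> q ^ (a * b) * (Qr q a * Qr q (N - a) * Qr q b * Qr q (N - b))"
    proof -
      have gg: "(1 - q) ^ N * (1 - q) ^ N \<le> (Qr q a * Qr q (N - a)) * (Qr q b * Qr q (N - b))"
        by (rule mult_mono[OF g1 g2]) (use p q1 in auto)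
      show ?thesis using mult_left_mono[OF gg less_imp_le[OF p(5)]] by (simp add: mult.assoc)
    qed
  qed (use qq p q1 in auto)
  also have "\<dots> = 1 / (1 - q) ^ (2 * N)" using p q0 q1 by (simp add: power_mult_distrib mult_2 power_add)
  finally have X: "\<bar>Xf q N a b\<bar> \<le> 1 / (1 - q) ^ (2 * N)" .
  have "norm (hval q v (N, a, b)) = q ^ tri N * \<bar>Xf q N a b\<bar> * norm v ^ (2 * N)"
    unfolding hval_def using q0 by (simp add: norm_mult norm_power abs_mult)
  also have "\<dots> \<le> q ^ tri N * (1 / (1 - q) ^ (2 * N)) * norm v ^ (2 * N)"
    using X q0 by (intro mult_right_mono mult_left_mono) auto
  also have "\<dots> = q ^ tri N * ((norm v)\<^sup>2 / (1 - q)\<^sup>2) ^ N"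
    by (simp add: power_mult power_divide)
  finally show ?thesis .
qed

lemma hval_summable: "hval q v summable_on SS"
proof -
  define c where "c = (norm v)\<^sup>2 / (1 - q)\<^sup>2"
  have c0: "c \<ge> 0" unfolding c_def by simp
  define G where "G N = q ^ tri N * c ^ N" for N
  have G0: "G N \<ge> 0" for N using q0 c0 by (simp add: G_def)
  have sq: "real ((Suc N)\<^sup>2) \<le> 4 ^ N" for N
  proof -
    have "Suc N \<le> 2 ^ N" by (rule Suc_leI) (rule less_exp)
    then have "(Suc N)\<^sup>2 \<le> (2 ^ N)\<^sup>2" by (rule power_mono) simp
    also have "\<dots> = 4 ^ N" by (simp flip: power_mult power_mult_distrib add: mult.commute power2_eq_square)
    finally show ?thesis by (metis of_nat_le_iff of_nat_numeral of_nat_power)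
  qed
  have "summable (\<lambda>N. q ^ tri N * (4 * c) ^ N)" using c0 by (intro summable_qg[OF q0 q1]) auto
  then have "summable (\<lambda>N. norm (real ((Suc N)\<^sup>2) * G N))"
    by (rule summable_comparison_test[rotated])
       (use sq G0 q0 c0 in \<open>auto simp: G_def power_mult_distrib mult_ac intro!: mult_right_mono mult_left_mono\<close>)
  then have gs: "(\<lambda>N. real ((Suc N)\<^sup>2) * G N) summable_on UNIV"
    by (rule norm_summable_imp_summable_on)
  have "(\<lambda>(N, p). G N) summable_on Sigma UNIV (\<lambda>N. {..N} \<times> {..N})"
  proof (rule summable_on_SigmaI[OF _ gs])
    show "((\<lambda>y. case (x, y) of (N, p) \<Rightarrow> G N) has_sum real ((Suc x)\<^sup>2) * G x) ({..x} \<times> {..x})" for x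
      by (rule has_sum_finiteI) (auto simp: power2_eq_square)
  qed (use G0 in auto)
  then have "(\<lambda>x. norm ((\<lambda>(N, p). G N) x)) summable_on SS"
    unfolding SS_def by (rule summable_on_cong[THEN iffD1, rotated]) (use G0 in auto)
  then have "(\<lambda>x. norm (hval q v x)) summable_on SS"
    by (rule Infinite_Sum.abs_summable_on_comparison_test)
       (use hval_bound G0 in \<open>auto simp: SS_def G_def c_def\<close>)
  then show ?thesis by (rule abs_summable_summable)
qed

end

context fixes q :: real assumes q0: "0 < q" and q1: "q < 1"
begin

lemma core: "((\<lambda>k::int. of_real (q ^ wt k) * (jackson2 (nat \<bar>k\<bar>) (2 * v) q)\<^sup>2) has_sum qpoch_inf (- (v\<^sup>2)) q) UNIV"
proof -
  define H where "H = infsum (hval q v) SS"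
  have hH: "(hval q v has_sum H) SS" unfolding H_def using hval_summable[OF q0 q1] by (rule has_sum_infsum)
  have hT: "(Tf q v has_sum H) UNIV"
    by (rule has_sum_reindex_bij_witness[where i = bwd and j = fwd and T = SS and h = "hval q v", THEN iffD2, OF _ _ _ _ _ refl hH])
       (auto simp: bwd_fwd fwd_bwd fwd_SS T_fwd[OF q0 q1])
  define P where "P N = of_real (q ^ tri N / Qr q N) * v ^ (2 * N)" for N
  have fib: "((\<lambda>p. hval q v (N, p)) has_sum P N) ({..N} \<times> {..N})" for N
  proof (rule has_sum_finiteI)
    have "(\<lambda>p. hval q v (N, p)) = (\<lambda>p. (of_real (q ^ tri N) * v ^ (2 * N)) * of_real (case p of (a, b) \<Rightarrow> Xf q N a b))"
      by (auto simp: hval_def fun_eq_iff)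
    then have "sum (\<lambda>p. hval q v (N, p)) ({..N} \<times> {..N}) = (of_real (q ^ tri N) * v ^ (2 * N)) * of_real (\<Sum>p\<in>{..N} \<times> {..N}. case p of (a, b) \<Rightarrow> Xf q N a b)"
      unfolding of_real_sum sum_distrib_left by (simp only:)
    also have "\<dots> = P N" unfolding fiber_real[OF q0 q1] P_def by simp
    finally show "P N = sum (\<lambda>p. hval q v (N, p)) ({..N} \<times> {..N})" by simp
  qed simp
  have "(P has_sum H) UNIV"
    by (rule has_sum_SigmaD[OF hH[unfolded SS_def]]) (use fib in auto)
  then have "P sums H" by (rule has_sum_imp_sums)
  moreover have "P sums qpoch_inf (- (v\<^sup>2)) q"
    unfolding P_def power_mult by (rule euler[OF q0 q1])
  ultimately have HH: "H = qpoch_inf (- (v\<^sup>2)) q" by (rule sums_unique2)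
  have inner: "((\<lambda>p. Tf q v (k, p)) has_sum of_real (q ^ wt k) * (jackson2 (nat \<bar>k\<bar>) (2 * v) q)\<^sup>2) UNIV" for k
  proof -
    define n where "n = nat \<bar>k\<bar>"
    define c where "c = of_real (q ^ wt k) * v ^ (2 * n)"
    have "((\<lambda>(m, m'). sN q v n m * sN q v n m') has_sum (suminf (sN q v n) * suminf (sN q v n))) UNIV"
      by (rule prod_has_sum[OF sN_summable[OF q0 q1] sN_summable[OF q0 q1]])
    from has_sum_cmult_right[OF this, of c]
    have "((\<lambda>p. Tf q v (k, p)) has_sum c * (suminf (sN q v n) * suminf (sN q v n))) UNIV"
      by (simp add: Tf_def c_def n_def case_prod_beta)
    moreover have "c * (suminf (sN q v n) * suminf (sN q v n)) = of_real (q ^ wt k) * (jackson2 (nat \<bar>k\<bar>) (2 * v) q)\<^sup>2"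
      unfolding jackson_formula[OF q0 q1] c_def n_def[symmetric] by (simp add: power_mult_distrib power_mult power2_eq_square)
    ultimately show ?thesis by simp
  qed
  have "((\<lambda>k. of_real (q ^ wt k) * (jackson2 (nat \<bar>k\<bar>) (2 * v) q)\<^sup>2) has_sum H) UNIV"
    by (rule has_sum_SigmaD[where f = "Tf q v" and S = H and A = UNIV and B = "\<lambda>_. UNIV"]) (use hT inner in auto)
  then show ?thesis using HH by simp
qed

end

lemma split_int_sum:
  fixes f :: "int \<Rightarrow> complex"
  assumes h: "(f has_sum P) UNIV"
  shows "(\<lambda>n. f (int (Suc n)) + f (- int (Suc n))) sums (P - f 0)"
proof -
  define A where "A = UNIV - {0::int}"
  have sA: "f summable_on A" using summable_on_subset_banach[OF has_sum_imp_summable[OF h]] by (simp add: A_def)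
  have hA: "(f has_sum infsum f A) A" using sA by (rule has_sum_infsum)
  have "(f has_sum (f 0 + infsum f A)) (insert 0 A)" by (rule has_sum_insert) (use hA in \<open>auto simp: A_def\<close>)
  then have "(f has_sum (f 0 + infsum f A)) UNIV" by (simp add: A_def insert_absorb)
  then have PP: "P = f 0 + infsum f A" using h has_sum_unique by blast
  define g where "g = (\<lambda>(n::nat, b::bool). if b then int (Suc n) else - int (Suc n))"
  define j where "j = (\<lambda>x::int. (nat \<bar>x\<bar> - 1, x > 0))"
  have "((f \<circ> g) has_sum infsum f A) (UNIV \<times> UNIV)"
    by (rule has_sum_reindex_bij_witness[where i = j and j = g and T = A and h = f, THEN iffD2, OF _ _ _ _ _ refl hA])
       (auto simp: g_def j_def A_def split: if_splits)
  then have "((\<lambda>n. f (int (Suc n)) + f (- int (Suc n))) has_sum infsum f A) UNIV"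
  proof (rule has_sum_SigmaD)
    show "((\<lambda>y. (f \<circ> g) (x, y)) has_sum f (int (Suc x)) + f (- int (Suc x))) UNIV" for x
      by (rule has_sum_finiteI) (auto simp: g_def UNIV_bool)
  qed
  then show ?thesis using PP by (simp add: has_sum_imp_sums)
qed

lemma wt_real: "real (wt k) = (real_of_int k ^ 2 - real_of_int k) / 2"
proof (cases "k \<ge> 0")
  case True
  then obtain n where k: "k = int n" by (metis nonneg_int_cases)
  have "real_of_int (2 * int (tri n)) = real_of_int (int n * (int n - 1))" by (simp only: tri2)
  then show ?thesis unfolding k wt_pos by (simp add: algebra_simps power2_eq_square)
next
  case False
  then obtain n where k: "k = - int n" by (metis nonpos_int_cases linorder_not_le less_imp_le)
  have "real_of_int (2 * int (tri (Suc n))) = real_of_int (int (Suc n) * (int (Suc n) - 1))" by (simp only: tri2)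
  then show ?thesis unfolding k wt_neg by (simp add: algebra_simps power2_eq_square)
qed

context fixes q :: real assumes q0: "0 < q" and q1: "q < 1"
begin

lemma qwt: "q ^ wt k = q powr (real_of_int k ^ 2 / 2 - real_of_int k / 2)"
  using q0 by (simp add: powr_realpow[symmetric] wt_real diff_divide_distrib)

lemma jfrak_sq: "(jfrak k (2 * w) q)\<^sup>2 = of_real (q powr (real_of_int k ^ 2 / 2)) * (jackson2 (nat \<bar>k\<bar>) (2 * (of_real (q powr (1/4)) * w)) q)\<^sup>2"
proof -
  have arg: "complex_of_real (q powr (1/4)) * (2 * w) = 2 * (of_real (q powr (1/4)) * w)" by simp
  have pp: "(q powr (x / 4))\<^sup>2 = q powr (x / 2)" for x
    by (simp add: power2_eq_square powr_add[symmetric])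
  show ?thesis
  proof (cases "k \<ge> 0")
    case True
    then show ?thesis unfolding jfrak_def arg
      using pp[of "real_of_int k ^ 2"] by (simp add: power_mult_distrib flip: of_real_power)
  next
    case False
    then have "(real_of_int (-k))\<^sup>2 = (real_of_int k)\<^sup>2" by simp
    then show ?thesis unfolding jfrak_def arg
      using pp[of "real_of_int k ^ 2"] False
      by (simp add: power_mult_distrib flip: of_real_power power_mult)
  qed
qed

lemma conj1_fun: "complex_of_real (q powr (- real_of_int k / 2)) * (jfrak k (2 * w) q)\<^sup>2
   = of_real (q ^ wt k) * (jackson2 (nat \<bar>k\<bar>) (2 * (of_real (q powr (1/4)) * w)) q)\<^sup>2"
  unfolding jfrak_sq qwt by (simp add: powr_add[symmetric] mult.assoc flip: of_real_mult)

lemma rhs_eq: "qpoch_inf (- complex_of_real (q powr (1/2)) * w\<^sup>2) q = qpoch_inf (- ((of_real (q powr (1/4)) * w)\<^sup>2)) q"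
proof -
  have "(q powr (1/4))\<^sup>2 = q powr (1/2)" by (simp add: power2_eq_square powr_add[symmetric])
  then have "(complex_of_real (q powr (1/4)) * w)\<^sup>2 = of_real (q powr (1/2)) * w\<^sup>2"
    by (simp add: power_mult_distrib flip: of_real_power)
  then show ?thesis by simp
qed

end

theorem mainTheorem10:
  fixes q :: real and w :: complex
  assumes "0 < q" and "q < 1"
  shows "((\<lambda>k::int. complex_of_real (q powr (- real_of_int k / 2)) * (jfrak k (2 * w) q)\<^sup>2)
            has_sum qpoch_inf (- complex_of_real (q powr (1/2)) * w\<^sup>2) q) UNIV
       \<and> (jfrak 0 (2 * w) q)\<^sup>2
           + (\<Sum>k. complex_of_real (q powr (real (Suc k) / 2) + q powr (- real (Suc k) / 2))
                    * (jfrak (int (Suc k)) (2 * w) q)\<^sup>2)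
         = qpoch_inf (- complex_of_real (q powr (1/2)) * w\<^sup>2) q
       \<and> (\<lambda>k. complex_of_real (q powr (real (Suc k) / 2) + q powr (- real (Suc k) / 2))
                    * (jfrak (int (Suc k)) (2 * w) q)\<^sup>2)
           sums (qpoch_inf (- complex_of_real (q powr (1/2)) * w\<^sup>2) q - (jfrak 0 (2 * w) q)\<^sup>2)
       \<and> (jackson2 0 (2 * w) q)\<^sup>2
           + (\<Sum>k. complex_of_real ((q powr (real (Suc k) / 2) + q powr (- real (Suc k) / 2))
                                     * q powr (real (Suc k) ^ 2 / 2))
                    * (jackson2 (Suc k) (2 * w) q)\<^sup>2)
         = qpoch_inf (- (w\<^sup>2)) q"
proof -
  note q = assms
  define v where "v = complex_of_real (q powr (1/4)) * w"
  define f where "f k = complex_of_real (q powr (- real_of_int k / 2)) * (jfrak k (2 * w) q)\<^sup>2" for k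
  define P where "P = qpoch_inf (- complex_of_real (q powr (1/2)) * w\<^sup>2) q"
  have c1: "(f has_sum P) UNIV"
    unfolding f_def P_def rhs_eq[OF q] conj1_fun[OF q] v_def[symmetric] by (rule core[OF q])
  have sq: "(jfrak (- int m) (2 * w) q)\<^sup>2 = (jfrak (int m) (2 * w) q)\<^sup>2" for m
    unfolding jfrak_sq[OF q] by simp
  have pair: "f (int (Suc n)) + f (- int (Suc n)) = complex_of_real (q powr (real (Suc n) / 2) + q powr (- real (Suc n) / 2))
                    * (jfrak (int (Suc n)) (2 * w) q)\<^sup>2" for n
    unfolding f_def sq by (simp add: algebra_simps)
  have f0: "f 0 = (jfrak 0 (2 * w) q)\<^sup>2" using q by (simp add: f_def)
  have c3: "(\<lambda>k. complex_of_real (q powr (real (Suc k) / 2) + q powr (- real (Suc k) / 2))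
                    * (jfrak (int (Suc k)) (2 * w) q)\<^sup>2) sums (P - (jfrak 0 (2 * w) q)\<^sup>2)"
    using split_int_sum[OF c1] unfolding pair f0 .
  have c2: "(jfrak 0 (2 * w) q)\<^sup>2 + (\<Sum>k. complex_of_real (q powr (real (Suc k) / 2) + q powr (- real (Suc k) / 2))
                    * (jfrak (int (Suc k)) (2 * w) q)\<^sup>2) = P"
    unfolding sums_unique[OF c3, symmetric] by simp
  define g where "g k = complex_of_real (q ^ wt k) * (jackson2 (nat \<bar>k\<bar>) (2 * w) q)\<^sup>2" for k
  have c4h: "(g has_sum qpoch_inf (- (w\<^sup>2)) q) UNIV" unfolding g_def by (rule core[OF q])
  have pair2: "g (int (Suc n)) + g (- int (Suc n)) = complex_of_real ((q powr (real (Suc n) / 2) + q powr (- real (Suc n) / 2))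
                                     * q powr (real (Suc n) ^ 2 / 2)) * (jackson2 (Suc n) (2 * w) q)\<^sup>2" for n
  proof -
    have a: "q ^ wt (int (Suc n)) = q powr (- real (Suc n) / 2) * q powr (real (Suc n) ^ 2 / 2)"
      unfolding qwt[OF q] powr_add[symmetric] by (rule arg_cong[where f="\<lambda>x. q powr x"]) (simp add: field_simps power2_eq_square)
    have b: "q ^ wt (- int (Suc n)) = q powr (real (Suc n) / 2) * q powr (real (Suc n) ^ 2 / 2)"
      unfolding qwt[OF q] powr_add[symmetric] by (rule arg_cong[where f="\<lambda>x. q powr x"]) (simp add: field_simps power2_eq_square)
    have nn: "nat \<bar>int (Suc n)\<bar> = Suc n" "nat \<bar>- int (Suc n)\<bar> = Suc n" by simp_all
    show ?thesis unfolding g_def a b nn by (simp add: algebra_simps)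
  qed
  have g0: "g 0 = (jackson2 0 (2 * w) q)\<^sup>2" by (simp add: g_def wt_def)
  have c4s: "(\<lambda>k. complex_of_real ((q powr (real (Suc k) / 2) + q powr (- real (Suc k) / 2))
                                     * q powr (real (Suc k) ^ 2 / 2)) * (jackson2 (Suc k) (2 * w) q)\<^sup>2)
             sums (qpoch_inf (- (w\<^sup>2)) q - (jackson2 0 (2 * w) q)\<^sup>2)"
    using split_int_sum[OF c4h] unfolding pair2 g0 .
  have c4: "(jackson2 0 (2 * w) q)\<^sup>2
           + (\<Sum>k. complex_of_real ((q powr (real (Suc k) / 2) + q powr (- real (Suc k) / 2))
                                     * q powr (real (Suc k) ^ 2 / 2))
                    * (jackson2 (Suc k) (2 * w) q)\<^sup>2)
         = qpoch_inf (- (w\<^sup>2)) q"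
    unfolding sums_unique[OF c4s, symmetric] by simp
  show ?thesis using c1 c2 c3 c4 unfolding f_def P_def by blast
qed

end
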